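(* There exists $h_c\in(\tfrac12,\tfrac34)$ such that $\sum_{k=1}^\infty\rho_h^2(k)<\frac14$ for all $h\in(\tfrac12,h_c)$, and $\sum_{k=1}^\infty\rho_h^2(k)>\frac14$ for all $h\in(h_c,\tfrac34)$.
   Context: $\rho_h(k)=\frac12\big((k+1)^{2h}+(k-1)^{2h}-2k^{2h}\big)$ for integers $k\ge1$. *)

theory Defs
  imports "HOL-Analysis.Analysis"
begin

definition rho :: "real \<Rightarrow> nat \<Rightarrow> real" where
  "rho h k = ((real k + 1) powr (2*h) + (real k - 1) powr (2*h) - 2 * (real k) powr (2*h)) / 2"

end

theory Submission
  imports Defs
begin


lemma second_diff_ge:
  fixes f f' f'' :: "real \<Rightarrow> real"
  assumes d1: "\<And>x. c-1 \<le> x \<Longrightarrow> x \<le> c+1 \<Longrightarrow> (f has_real_derivative f' x) (at x)"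
    and d2: "\<And>x. c-1 \<le> x \<Longrightarrow> x \<le> c+1 \<Longrightarrow> (f' has_real_derivative f'' x) (at x)"
    and m: "\<And>x. c-1 \<le> x \<Longrightarrow> x \<le> c+1 \<Longrightarrow> m \<le> f'' x"
  shows "m \<le> f (c+1) + f (c-1) - 2 * f c"
proof -
  define p where "p t = f' (c+t) - f' (c-t) - 2*m*t" for t
  define q where "q t = f (c+t) + f (c-t) - 2 * f c - m*t^2" for t
  have p0: "0 \<le> p t" if t: "0 \<le> t" "t \<le> 1" for t
  proof -
    have "p 0 \<le> p t"
    proof (rule DERIV_nonneg_imp_nondecreasing[OF t(1)])
      fix x assume x: "0 \<le> x" "x \<le> t"
      have a: "((\<lambda>t. f' (c+t)) has_real_derivative f'' (c+x) * 1) (at x)"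
        by (rule DERIV_chain2[OF d2]) (use x t in \<open>auto intro!: derivative_eq_intros\<close>)
      have b: "((\<lambda>t. f' (c-t)) has_real_derivative f'' (c-x) * (-1)) (at x)"
        by (rule DERIV_chain2[OF d2]) (use x t in \<open>auto intro!: derivative_eq_intros\<close>)
      have "(p has_real_derivative (f'' (c+x) * 1 - f'' (c-x) * (-1) - 2*m)) (at x)"
        unfolding p_def[abs_def]
        using DERIV_diff[OF DERIV_diff[OF a b] DERIV_cmult[OF DERIV_ident, of "2*m"]] by simp
      moreover have "f'' (c+x) * 1 - f'' (c-x) * (-1) - 2*m \<ge> 0"
        using m[of "c+x"] m[of "c-x"] x t by auto
      ultimately show "\<exists>y. DERIV p x :> y \<and> y \<ge> 0" by blast
    qed
    then show ?thesis by (simp add: p_def)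
  qed
  have "q 0 \<le> q 1"
  proof (rule DERIV_nonneg_imp_nondecreasing[of 0 1])
    fix x :: real assume x: "0 \<le> x" "x \<le> 1"
    have a: "((\<lambda>t. f (c+t)) has_real_derivative f' (c+x) * 1) (at x)"
      by (rule DERIV_chain2[OF d1]) (use x in \<open>auto intro!: derivative_eq_intros\<close>)
    have b: "((\<lambda>t. f (c-t)) has_real_derivative f' (c-x) * (-1)) (at x)"
      by (rule DERIV_chain2[OF d1]) (use x in \<open>auto intro!: derivative_eq_intros\<close>)
    have "(q has_real_derivative (f' (c+x) * 1 + f' (c-x) * (-1) - 0 - m * (2 * x))) (at x)"
      unfolding q_def[abs_def]
      using DERIV_diff[OF DERIV_diff[OF DERIV_add[OF a b] DERIV_const[of "2 * f c"]] DERIV_cmult[OF DERIV_pow[of 2], of m]] by simp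
    moreover have "f' (c+x) * 1 + f' (c-x) * (-1) - 0 - m * (2 * x) = p x"
      by (simp add: p_def algebra_simps)
    ultimately show "\<exists>y. DERIV q x :> y \<and> y \<ge> 0" using p0[OF x] by metis
  qed simp
  then show ?thesis by (simp add: q_def)
qed


lemma rho_one: "rho h (Suc 0) = (2 powr (2*h) - 2)/2"
  by (simp add: rho_def)

lemma rho_half: "k \<ge> 1 \<Longrightarrow> rho (1/2) k = 0"
  by (simp add: rho_def)

lemma deriv_pw: "x > 0 \<Longrightarrow> ((\<lambda>x. x powr a) has_real_derivative a * x powr (a-1)) (at x)"
  by (rule has_real_derivative_powr)

lemma deriv_pw2: "x > 0 \<Longrightarrow> ((\<lambda>x. a * x powr (a - 1)) has_real_derivative a * (a-1) * x powr (a-2)) (at x)"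
  using DERIV_cmult[OF has_real_derivative_powr[of x "a-1"], of a] by (simp add: algebra_simps)

lemma rho_mono_k:
  assumes h: "1/2 \<le> h" "h \<le> h'" and k: "k \<ge> 2"
  shows "rho h k \<le> rho h' k"
proof -
  define a where "a = 2*h"
  define b where "b = 2*h'"
  have a1: "1 \<le> a" "a \<le> b" using h by (auto simp: a_def b_def)
  have "0 \<le> (\<lambda>x. x powr b - x powr a) (real k + 1) + (\<lambda>x. x powr b - x powr a) (real k - 1)
      - 2 * (\<lambda>x. x powr b - x powr a) (real k)"
  proof (rule second_diff_ge[where f' = "\<lambda>x. b * x powr (b-1) - a * x powr (a-1)"
        and f'' = "\<lambda>x. b*(b-1) * x powr (b-2) - a*(a-1) * x powr (a-2)"])
    fix x assume x: "real k - 1 \<le> x" "x \<le> real k + 1"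
    have x1: "x \<ge> 1" using x k by auto
    then have xp: "x > 0" by auto
    show "((\<lambda>x. x powr b - x powr a) has_real_derivative b * x powr (b-1) - a * x powr (a-1)) (at x)"
      by (intro DERIV_diff deriv_pw xp)
    show "((\<lambda>x. b * x powr (b-1) - a * x powr (a-1)) has_real_derivative
        b*(b-1) * x powr (b-2) - a*(a-1) * x powr (a-2)) (at x)"
      by (intro DERIV_diff deriv_pw2 xp)
    have "x powr (a-2) \<le> x powr (b-2)" using x1 a1 by (intro powr_mono) auto
    moreover have "a*(a-1) \<le> b*(b-1)" using a1 by (intro mult_mono) auto
    moreover have "0 \<le> a*(a-1)" using a1 by auto
    ultimately have "a*(a-1) * x powr (a-2) \<le> b*(b-1) * x powr (b-2)"
      using a1 by (intro mult_mono) auto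
    then show "0 \<le> b*(b-1) * x powr (b-2) - a*(a-1) * x powr (a-2)" by simp
  qed
  then show ?thesis unfolding rho_def a_def b_def by (simp add: field_simps)
qed

lemma rho_upper:
  assumes h: "1/2 \<le> h" "h \<le> 1" and k: "k \<ge> 2"
  shows "rho h k \<le> h*(2*h-1) * (real k - 1) powr (2*h-2)"
proof -
  define a where "a = 2*h"
  have a1: "1 \<le> a" "a \<le> 2" using h by (auto simp: a_def)
  have "- (a*(a-1) * (real k - 1) powr (a-2)) \<le> (\<lambda>x. - (x powr a)) (real k + 1) + (\<lambda>x. - (x powr a)) (real k - 1)
      - 2 * (\<lambda>x. - (x powr a)) (real k)"
  proof (rule second_diff_ge[where f' = "\<lambda>x. - (a * x powr (a-1))"
        and f'' = "\<lambda>x. - (a*(a-1) * x powr (a-2))"])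
    fix x assume x: "real k - 1 \<le> x" "x \<le> real k + 1"
    have x1: "x \<ge> 1" using x k by auto
    then have xp: "x > 0" by auto
    show "((\<lambda>x. - (x powr a)) has_real_derivative - (a * x powr (a-1))) (at x)"
      by (intro DERIV_minus deriv_pw xp)
    show "((\<lambda>x. - (a * x powr (a-1))) has_real_derivative - (a*(a-1) * x powr (a-2))) (at x)"
      by (intro DERIV_minus deriv_pw2 xp)
    have "x powr (a-2) \<le> (real k - 1) powr (a-2)" using x k a1 by (intro powr_mono2') auto
    moreover have "0 \<le> a*(a-1)" using a1 by auto
    ultimately show "- (a*(a-1) * (real k - 1) powr (a-2)) \<le> - (a*(a-1) * x powr (a-2))"
      by (simp add: mult_left_mono)
  qed
  then show ?thesis unfolding rho_def a_def by (simp add: field_simps)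
qed

lemma rho_nonneg: "1/2 \<le> h \<Longrightarrow> k \<ge> 1 \<Longrightarrow> 0 \<le> rho h k"
proof -
  assume h: "1/2 \<le> h" and k: "k \<ge> 1"
  show ?thesis
  proof (cases "k = 1")
    case True
    have "2 powr 1 \<le> 2 powr (2*h)" using h by (intro powr_mono) auto
    then show ?thesis using True by (simp add: rho_one)
  next
    case False
    then show ?thesis using rho_mono_k[of "1/2" h k] rho_half[of k] h k by auto
  qed
qed


lemma T_bound:
  assumes h: "1/2 \<le> h" "h \<le> 1" and k: "k \<ge> 1"
  shows "(rho h (Suc k))\<^sup>2 \<le> (h*(2*h-1))\<^sup>2 * real k powr (4*h-4)"
proof -
  have "rho h (Suc k) \<le> h*(2*h-1) * real k powr (2*h-2)"
    using rho_upper[OF h, of "Suc k"] k by simp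
  moreover have "0 \<le> rho h (Suc k)" using rho_nonneg[OF h(1)] by simp
  ultimately have "(rho h (Suc k))\<^sup>2 \<le> (h*(2*h-1) * real k powr (2*h-2))\<^sup>2"
    by (intro power_mono) auto
  also have "\<dots> = (h*(2*h-1))\<^sup>2 * (real k powr (2*h-2) * real k powr (2*h-2))"
    by (simp add: power2_eq_square algebra_simps)
  also have "real k powr (2*h-2) * real k powr (2*h-2) = real k powr (4*h-4)"
    by (simp add: powr_add[symmetric])
  finally show ?thesis .
qed

lemma summ:
  assumes h: "1/2 \<le> h" "h < 3/4"
  shows "summable (\<lambda>k. (rho h (Suc k))\<^sup>2)"
proof (rule summable_comparison_test)
  show "\<exists>N. \<forall>n\<ge>N. norm ((rho h (Suc n))\<^sup>2) \<le> (h*(2*h-1))\<^sup>2 * real n powr (4*h-4)"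
    using T_bound h by (intro exI[of _ 1]) auto
  show "summable (\<lambda>n. (h*(2*h-1))\<^sup>2 * real n powr (4*h-4))"
    using h by (intro summable_mult) (simp add: summable_real_powr_iff)
qed

lemma S_mono:
  assumes h: "1/2 \<le> h" "h < h'" "h' < 3/4"
  shows "(\<Sum>k. (rho h (Suc k))\<^sup>2) < (\<Sum>k. (rho h' (Suc k))\<^sup>2)"
proof -
  have s1: "summable (\<lambda>k. (rho h (Suc k))\<^sup>2)" using summ h by auto
  have s2: "summable (\<lambda>k. (rho h' (Suc k))\<^sup>2)" using summ h by auto
  have "0 < (\<Sum>k. (rho h' (Suc k))\<^sup>2 - (rho h (Suc k))\<^sup>2)"
  proof (rule suminf_pos2[where i=0])
    show "summable (\<lambda>k. (rho h' (Suc k))\<^sup>2 - (rho h (Suc k))\<^sup>2)"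
      by (rule summable_diff[OF s2 s1])
    fix n
    have "rho h (Suc n) \<le> rho h' (Suc n)"
    proof (cases n)
      case 0
      have "2 powr (2*h) \<le> 2 powr (2*h')" using h by (intro powr_mono) auto
      then show ?thesis using 0 by (simp add: rho_one)
    next
      case (Suc m)
      then show ?thesis using rho_mono_k[of h h' "Suc n"] h by auto
    qed
    moreover have "0 \<le> rho h (Suc n)" using rho_nonneg h by auto
    ultimately show "0 \<le> (rho h' (Suc n))\<^sup>2 - (rho h (Suc n))\<^sup>2"
      by (simp add: power_mono)
  next
    have "2 powr (2*h) < 2 powr (2*h')" using h by (intro powr_less_mono) auto
    then have "rho h (Suc 0) < rho h' (Suc 0)" by (simp add: rho_one)
    moreover have "0 \<le> rho h (Suc 0)" using rho_nonneg h by auto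
    ultimately show "0 < (rho h' (Suc 0))\<^sup>2 - (rho h (Suc 0))\<^sup>2"
      by (simp add: power_strict_mono)
  qed
  also have "\<dots> = (\<Sum>k. (rho h' (Suc k))\<^sup>2) - (\<Sum>k. (rho h (Suc k))\<^sup>2)"
    using suminf_diff[OF s2 s1] by simp
  finally show ?thesis by simp
qed


lemma near_half: "\<exists>h. 1/2 < h \<and> h < 3/4 \<and> (\<Sum>k. (rho h (Suc k))\<^sup>2) < 1/4"
proof -
  define C where "C = (\<Sum>k. real (Suc k) powr (-3/2))"
  have sC: "summable (\<lambda>k. real (Suc k) powr (-3/2))"
    using summable_Suc_iff[of "\<lambda>n. real n powr (-3/2)"] by (simp add: summable_real_powr_iff)
  define g where "g h = ((2 powr (2*h) - 2)/2)\<^sup>2 + (2*h-1)\<^sup>2 * C" for h :: real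
  have "(g \<longlongrightarrow> g (1/2)) (at_right (1/2))"
    unfolding g_def by (intro tendsto_intros) auto
  moreover have "g (1/2) = 0" by (simp add: g_def)
  ultimately have "eventually (\<lambda>h. g h < 1/4) (at_right (1/2))"
    by (intro order_tendstoD(2)) auto
  then obtain b where b: "b > 1/2" "\<And>y. y > 1/2 \<Longrightarrow> y < b \<Longrightarrow> g y < 1/4"
    unfolding eventually_at_right_field by blast
  define h where "h = min ((1/2 + b)/2) (5/8)"
  have "h \<le> (1/2 + b)/2" "h \<le> 5/8" "h = (1/2 + b)/2 \<or> h = 5/8" unfolding h_def min_def by auto
  then have h: "1/2 < h" "h < b" "h \<le> 5/8" using b(1) by auto
  have gh: "g h < 1/4" using b(2) h by auto
  have s: "summable (\<lambda>k. (rho h (Suc k))\<^sup>2)" using summ h by auto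
  have "(\<Sum>k. (rho h (Suc k))\<^sup>2) = (rho h (Suc 0))\<^sup>2 + (\<Sum>k. (rho h (Suc (Suc k)))\<^sup>2)"
    using suminf_split_head[OF s] by simp
  also have "(\<Sum>k. (rho h (Suc (Suc k)))\<^sup>2) \<le> (\<Sum>k. (2*h-1)\<^sup>2 * real (Suc k) powr (-3/2))"
  proof (rule suminf_le)
    fix k
    have "(rho h (Suc (Suc k)))\<^sup>2 \<le> (h*(2*h-1))\<^sup>2 * real (Suc k) powr (4*h-4)"
      using T_bound[of h "Suc k"] h by auto
    also have "\<dots> \<le> (2*h-1)\<^sup>2 * real (Suc k) powr (-3/2)"
    proof (rule mult_mono)
      have "h\<^sup>2 \<le> 1" using h by (simp add: power_le_one)
      then show "(h*(2*h-1))\<^sup>2 \<le> (2*h-1)\<^sup>2"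
        by (simp add: power_mult_distrib mult_left_le_one_le)
      show "real (Suc k) powr (4*h-4) \<le> real (Suc k) powr (-3/2)"
        using h by (intro powr_mono) auto
    qed auto
    finally show "(rho h (Suc (Suc k)))\<^sup>2 \<le> (2*h-1)\<^sup>2 * real (Suc k) powr (-3/2)" .
  next
    show "summable (\<lambda>k. (rho h (Suc (Suc k)))\<^sup>2)" using s summable_Suc_iff[of "\<lambda>k. (rho h (Suc k))\<^sup>2"] by simp
    show "summable (\<lambda>k. (2*h-1)\<^sup>2 * real (Suc k) powr (-3/2))" using sC by (rule summable_mult)
  qed
  also have "(\<Sum>k. (2*h-1)\<^sup>2 * real (Suc k) powr (-3/2)) = (2*h-1)\<^sup>2 * C"
    unfolding C_def using suminf_mult[OF sC] by simp
  finally have "(\<Sum>k. (rho h (Suc k))\<^sup>2) \<le> g h" by (simp add: g_def rho_one)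
  with gh h show ?thesis by (intro exI[of _ h]) auto
qed

lemma powr32: "0 \<le> x \<Longrightarrow> x powr (3/2) = x * sqrt (x::real)"
proof -
  assume x: "0 \<le> x"
  have "x powr (3/2) = x powr (1 + 1/2)" by simp
  also have "\<dots> = x powr 1 * x powr (1/2)" by (rule powr_add)
  also have "\<dots> = x * sqrt x" using x by (simp add: powr_half_sqrt)
  finally show ?thesis .
qed

lemma num_ineq: "(1/4::real) < ((2* sqrt 2 - 2)/2)\<^sup>2 + ((3* sqrt 3 + 1 - 2*(2* sqrt 2))/2)\<^sup>2
   + ((4*2 + 2* sqrt 2 - 2*(3* sqrt 3))/2)\<^sup>2"
proof -
  define sa where "sa = sqrt (2::real)"
  define ta where "ta = sqrt (3::real)"
  have ss: "sa * sa = 2" by (simp add: sa_def)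
  have tt: "ta * ta = 3" by (simp add: ta_def)
  have s1: "14142/10000 \<le> sa" unfolding sa_def by (rule real_le_rsqrt) (simp add: power2_eq_square)
  have t1: "ta \<le> 173206/100000" unfolding ta_def by (rule real_le_lsqrt) (simp_all add: power2_eq_square)
  have st: "sa * ta \<le> 24495/10000" unfolding sa_def ta_def real_sqrt_mult[symmetric]
    by (rule real_le_lsqrt) (simp_all add: power2_eq_square)
  have "((2 * sa - 2)/2)\<^sup>2 + ((3*ta + 1 - 2*(2 * sa))/2)\<^sup>2 + ((4*2 + 2 * sa - 2*(3*ta))/2)\<^sup>2
        = 63 + 4 * sa - 45/2*ta - 12*(sa * ta)"
    proof -
    have a: "sa * (sa * c) = 2 * c" for c by (simp add: mult.assoc[symmetric] ss)
    have b: "ta * (ta * c) = 3 * c" for c by (simp add: mult.assoc[symmetric] tt)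
    have m: "sa * (ta * c) = c * (sa * ta)" for c by simp
    show ?thesis by (simp add: power2_eq_square algebra_simps a b ss tt) (simp add: field_simps)
  qed
  also have "\<dots> > 1/4" using s1 t1 st by linarith
  finally show ?thesis unfolding sa_def ta_def .
qed

lemma near_34: "\<exists>h. 1/2 < h \<and> h < 3/4 \<and> (\<Sum>k. (rho h (Suc k))\<^sup>2) > 1/4"
proof -
  define g where "g h = ((2 powr (2*h) - 2)/2)\<^sup>2 + ((3 powr (2*h) + 1 - 2*2 powr (2*h))/2)\<^sup>2
     + ((4 powr (2*h) + 2 powr (2*h) - 2*3 powr (2*h))/2)\<^sup>2" for h :: real
  have gs: "(\<Sum>k<3. (rho h (Suc k))\<^sup>2) = g h" for h
    by (simp add: g_def rho_def eval_nat_numeral numeral_3_eq_3 algebra_simps)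
  have "(g \<longlongrightarrow> g (3/4)) (at_left (3/4))"
    unfolding g_def by (intro tendsto_intros) auto
  moreover have "g (3/4) > 1/4"
  proof -
    have "g (3/4) = ((2* sqrt 2 - 2)/2)\<^sup>2 + ((3* sqrt 3 + 1 - 2*(2* sqrt 2))/2)\<^sup>2
      + ((4* sqrt 4 + 2* sqrt 2 - 2*(3* sqrt 3))/2)\<^sup>2"
      by (simp add: g_def powr32)
    also have "sqrt 4 = 2" using real_sqrt_abs[of 2] by simp
    finally show ?thesis using num_ineq by simp
  qed
  ultimately have "eventually (\<lambda>h. g h > 1/4) (at_left (3/4))"
    by (intro order_tendstoD(1)) auto
  then obtain b where b: "b < 3/4" "\<And>y. y > b \<Longrightarrow> y < 3/4 \<Longrightarrow> g y > 1/4"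
    unfolding eventually_at_left_field by blast
  define h where "h = max ((3/4 + b)/2) (5/8)"
  have "h \<ge> (3/4 + b)/2" "h \<ge> 5/8" "h = (3/4 + b)/2 \<or> h = 5/8" unfolding h_def max_def by auto
  then have h: "h > b" "h < 3/4" "h \<ge> 5/8" using b(1) by auto
  have gh: "g h > 1/4" using b(2) h by auto
  have s: "summable (\<lambda>k. (rho h (Suc k))\<^sup>2)" using summ h by auto
  have "g h \<le> (\<Sum>k. (rho h (Suc k))\<^sup>2)"
    unfolding gs[symmetric] by (rule sum_le_suminf[OF s]) auto
  with gh h show ?thesis by (intro exI[of _ h]) auto
qed

theorem corollaryA5:
  shows "\<exists>hc::real. 1/2 < hc \<and> hc < 3/4 \<and>
    (\<forall>h. 1/2 < h \<and> h < hc \<longrightarrow> (\<Sum>k. (rho h (Suc k))\<^sup>2) < 1/4) \<and>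
    (\<forall>h. hc < h \<and> h < 3/4 \<longrightarrow> (\<Sum>k. (rho h (Suc k))\<^sup>2) > 1/4)"
proof -
  define S where "S h = (\<Sum>k. (rho h (Suc k))\<^sup>2)" for h
  define A where "A = {h. 1/2 < h \<and> h < 3/4 \<and> S h < 1/4}"
  obtain h1 where h1: "1/2 < h1" "h1 < 3/4" "S h1 < 1/4" using near_half unfolding S_def by blast
  obtain h0 where h0: "1/2 < h0" "h0 < 3/4" "S h0 > 1/4" using near_34 unfolding S_def by blast
  have mono: "S x < S y" if "1/2 < x" "x < y" "y < 3/4" for x y
    using S_mono[of x y] that by (simp add: S_def)
  have ub: "h < h0" if "h \<in> A" for h
  proof (rule ccontr)
    assume "\<not> h < h0"
    then have "h0 = h \<or> h0 < h" by auto
    then have "S h0 \<le> S h" using mono[of h0 h] that h0 unfolding A_def by auto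
    then show False using h0 that unfolding A_def by auto
  qed
  have h1A: "h1 \<in> A" using h1 by (simp add: A_def)
  have bdd: "bdd_above A" using ub by (meson bdd_aboveI less_imp_le)
  have ne: "A \<noteq> {}" using h1A by auto
  define hc where "hc = Sup A"
  have "h1 \<le> hc" unfolding hc_def using cSup_upper[OF h1A bdd] .
  moreover have "hc \<le> h0" unfolding hc_def using ub by (intro cSup_least[OF ne]) (auto intro: less_imp_le)
  moreover have lo: "\<forall>h. 1/2 < h \<and> h < hc \<longrightarrow> S h < 1/4"
  proof (intro allI impI)
    fix h assume h: "1/2 < h \<and> h < hc"
    then obtain h' where h': "h' \<in> A" "h < h'" using less_cSup_iff[OF ne bdd] unfolding hc_def by blast
    then have "S h < S h'" using mono[of h h'] h unfolding A_def by auto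
    then show "S h < 1/4" using h' unfolding A_def by auto
  qed
  moreover have hi: "\<forall>h. hc < h \<and> h < 3/4 \<longrightarrow> S h > 1/4"
  proof (intro allI impI)
    fix h assume h: "hc < h \<and> h < 3/4"
    define h'' where "h'' = (hc + h)/2"
    have hh: "hc < h''" "h'' < h" using h by (auto simp: h''_def)
    have "h'' \<notin> A"
    proof
      assume "h'' \<in> A"
      then have "h'' \<le> hc" unfolding hc_def using cSup_upper[OF _ bdd] by blast
      then show False using hh by auto
    qed
    then have "S h'' \<ge> 1/4" using hh h h1 \<open>h1 \<le> hc\<close> unfolding A_def by auto
    moreover have "S h'' < S h" using mono[of h'' h] hh h h1 \<open>h1 \<le> hc\<close> by auto
    ultimately show "S h > 1/4" by auto
  qed
  ultimately show ?thesis using h1 h0 unfolding S_def by (intro exI[of _ hc]) auto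
qed

end
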